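(* Let $0\le\beta<1$, $s=s_n\ll n/\log n$, $S\subset[n]$ with $|S|=s$, $A=A_n\ge0$ and $\lambda=\lambda_n\in\mathbb R$ with $s\max\{|\tanh(\lambda+A)|,\tanh(A)\}\ll\sqrt n$. Then $$\mathbb E_{\beta,\mathbf Q^{\rm CW},\boldsymbol\mu_S(A)}\Big(\exp\big(\lambda\sum_{i\in S}X_i\big)\Big)=(1+o(1))\Big(\frac{\cosh(A+\lambda)}{\cosh(A)}\Big)^s.$$
   Context: Ising model $\mathbb P_{\beta,\mathbf Q,\boldsymbol\mu}(\mathbf X=\mathbf x)=Z(\beta,\mathbf Q,\boldsymbol\mu)^{-1}\exp(\frac\beta2\mathbf x^\top\mathbf Q\mathbf x+\boldsymbol\mu^\top\mathbf x)$ on $\{-1,1\}^n$; $\mathbf Q^{\rm CW}_{ij}=\mathbf 1(i\ne j)/n$; $\boldsymbol\mu_S(A)$ has entries $A\mathbf 1(i\in S)$. $a_n\ll b_n$ means $a_n/b_n\to0$. *)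

theory Defs
  imports "HOL-Analysis.Analysis"
begin

text \<open>Spin configurations on [n], with [n] rendered 0-based as {..<n}.\<close>
definition spins :: "nat \<Rightarrow> (nat \<Rightarrow> real) set" where
  "spins n = PiE {..<n} (\<lambda>_. {-1, 1})"

definition ising_weight ::
  "nat \<Rightarrow> real \<Rightarrow> (nat \<Rightarrow> nat \<Rightarrow> real) \<Rightarrow> (nat \<Rightarrow> real) \<Rightarrow> (nat \<Rightarrow> real) \<Rightarrow> real" where
  "ising_weight n \<beta> Q \<mu> x =
     exp (\<beta> / 2 * (\<Sum>i<n. \<Sum>j<n. x i * Q i j * x j) + (\<Sum>i<n. \<mu> i * x i))"

definition ising_Z ::
  "nat \<Rightarrow> real \<Rightarrow> (nat \<Rightarrow> nat \<Rightarrow> real) \<Rightarrow> (nat \<Rightarrow> real) \<Rightarrow> real" where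
  "ising_Z n \<beta> Q \<mu> = (\<Sum>x\<in>spins n. ising_weight n \<beta> Q \<mu> x)"

definition ising_expect ::
  "nat \<Rightarrow> real \<Rightarrow> (nat \<Rightarrow> nat \<Rightarrow> real) \<Rightarrow> (nat \<Rightarrow> real) \<Rightarrow> ((nat \<Rightarrow> real) \<Rightarrow> real) \<Rightarrow> real" where
  "ising_expect n \<beta> Q \<mu> f =
     (\<Sum>x\<in>spins n. f x * ising_weight n \<beta> Q \<mu> x) / ising_Z n \<beta> Q \<mu>"

definition Q_CW :: "nat \<Rightarrow> nat \<Rightarrow> nat \<Rightarrow> real" where
  "Q_CW n i j = (if i \<noteq> j then 1 / real n else 0)"

definition mu_S :: "nat set \<Rightarrow> real \<Rightarrow> nat \<Rightarrow> real" where
  "mu_S S A i = (if i \<in> S then A else 0)"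

end

theory Submission
  imports Defs "HOL-Probability.Distributions"
begin


lemma gauss_mgf:
  fixes \<sigma> e :: real
  assumes "\<sigma> > 0"
  shows "has_bochner_integral lborel (\<lambda>g. exp (- g\<^sup>2 / (2 * \<sigma>\<^sup>2)) * exp (e * g))
           (sqrt (2 * pi * \<sigma>\<^sup>2) * exp (e\<^sup>2 * \<sigma>\<^sup>2 / 2))"
proof -
  let ?C = "sqrt (2 * pi * \<sigma>\<^sup>2) * exp (e\<^sup>2 * \<sigma>\<^sup>2 / 2)"
  have "has_bochner_integral lborel (normal_density (e * \<sigma>\<^sup>2) \<sigma>) 1"
    unfolding has_bochner_integral_iff
    using integrable_normal_density[of \<sigma> "e * \<sigma>\<^sup>2"] integral_normal_density[of \<sigma> "e * \<sigma>\<^sup>2"] assms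
    by blast
  then have "has_bochner_integral lborel (\<lambda>g. ?C * normal_density (e * \<sigma>\<^sup>2) \<sigma> g) (?C * 1)"
    by (rule has_bochner_integral_mult_right)
  moreover have "?C * normal_density (e * \<sigma>\<^sup>2) \<sigma> g = exp (- g\<^sup>2 / (2 * \<sigma>\<^sup>2)) * exp (e * g)" for g
  proof -
    have pos: "sqrt (2 * pi * \<sigma>\<^sup>2) > 0" using assms by simp
    have "exp (e\<^sup>2 * \<sigma>\<^sup>2 / 2) * exp (-(g - e * \<sigma>\<^sup>2)\<^sup>2/ (2 * \<sigma>\<^sup>2))
          = exp (- g\<^sup>2 / (2 * \<sigma>\<^sup>2) + e * g)"
      unfolding exp_add[symmetric] using assms
      by (intro arg_cong[where f=exp]) (simp add: field_simps power2_eq_square)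
    moreover have "exp (- g\<^sup>2 / (2 * \<sigma>\<^sup>2) + e * g) = exp (- g\<^sup>2 / (2 * \<sigma>\<^sup>2)) * exp (e * g)"
      by (rule exp_add)
    ultimately show ?thesis using pos assms unfolding normal_density_def
      by simp
  qed
  ultimately show ?thesis by simp
qed

lemma gauss1:
  fixes e :: real
  shows "has_bochner_integral lborel (\<lambda>g. exp (- g\<^sup>2 / 2) * exp (e * g))
           (sqrt (2 * pi) * exp (e\<^sup>2 / 2))"
  using gauss_mgf[of 1 e] by simp

lemma sum_if_restrict:
  fixes n :: nat
  assumes "S \<subseteq> {..<n}"
  shows "(\<Sum>i<n. (if i \<in> S then a else 0) * (x i::real)) = a * (\<Sum>i\<in>S. x i)"
proof -
  have "(\<Sum>i<n. (if i \<in> S then a else 0) * (x i::real)) = (\<Sum>i<n. (if i \<in> S then a * x i else 0))"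
    by (intro sum.cong) auto
  also have "\<dots> = (\<Sum>i\<in>{..<n} \<inter> S. a * x i)"
    by (rule sum.inter_restrict[symmetric]) simp
  also have "{..<n} \<inter> S = S" using assms by blast
  finally show ?thesis by (simp add: sum_distrib_left)
qed

lemma prodform:
  assumes "S \<subseteq> {..<n}"
  shows "(\<Sum>x\<in>spins n. exp (w * (\<Sum>i<n. x i) + a * (\<Sum>i\<in>S. x i)))
         = (2 * cosh w) ^ (n - card S) * (2 * cosh (w + a)) ^ card S"
proof -
  let ?b = "\<lambda>i. w + (if i \<in> S then a else 0)"
  have e1: "exp (w * (\<Sum>i<n. x i) + a * (\<Sum>i\<in>S. x i)) = (\<Prod>i<n. exp (?b i * x i))" for x :: "nat \<Rightarrow> real"
  proof -
    have "w * (\<Sum>i<n. x i) + a * (\<Sum>i\<in>S. x i) = (\<Sum>i<n. ?b i * x i)"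
      using sum_if_restrict[OF assms, of a x]
      by (simp add: sum_distrib_left distrib_right sum.distrib)
    then show ?thesis by (simp add: exp_sum)
  qed
  have "(\<Sum>x\<in>spins n. exp (w * (\<Sum>i<n. x i) + a * (\<Sum>i\<in>S. x i)))
        = (\<Sum>x\<in>PiE {..<n} (\<lambda>_. {-1, 1::real}). \<Prod>i<n. exp (?b i * x i))"
    unfolding spins_def using e1 by simp
  also have "\<dots> = (\<Prod>i<n. \<Sum>v\<in>{-1, 1::real}. exp (?b i * v))"
    by (rule prod_sum_PiE[symmetric]) auto
  also have "\<dots> = (\<Prod>i<n. if i \<in> S then 2 * cosh (w + a) else 2 * cosh w)"
    by (intro prod.cong) (auto simp: cosh_def)
  also have "\<dots> = (\<Prod>i\<in>{..<n} \<inter> {i. i \<in> S}. 2 * cosh (w + a)) * (\<Prod>i\<in>{..<n} \<inter> - {i. i \<in> S}. 2 * cosh w)"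
    by (rule prod.If_cases) simp
  also have "{..<n} \<inter> {i. i \<in> S} = S" using assms by blast
  also have "{..<n} \<inter> - {i. i \<in> S} = {..<n} - S" by blast
  finally show ?thesis
    using assms by (simp add: mult.commute card_Diff_subset finite_subset)
qed

definition Wf :: "nat \<Rightarrow> real \<Rightarrow> nat set \<Rightarrow> real \<Rightarrow> real" where
  "Wf n \<beta> S a = (\<Sum>x\<in>spins n. exp (\<beta> * (\<Sum>i<n. x i)\<^sup>2 / (2 * real n) + a * (\<Sum>i\<in>S. x i)))"

lemma hs:
  assumes "n > 0" "\<beta> \<ge> 0" "S \<subseteq> {..<n}"
  shows "has_bochner_integral lborel
     (\<lambda>g. exp (- g\<^sup>2 / 2) * ((2 * cosh (sqrt (\<beta> / n) * g)) ^ (n - card S)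
                                * (2 * cosh (sqrt (\<beta> / n) * g + a)) ^ card S))
     (sqrt (2 * pi) * Wf n \<beta> S a)"
proof -
  define c where "c = sqrt (\<beta> / n)"
  define M where "M = (\<lambda>x::nat\<Rightarrow>real. \<Sum>i<n. x i)"
  define T where "T = (\<lambda>x::nat\<Rightarrow>real. \<Sum>i\<in>S. x i)"
  have each: "has_bochner_integral lborel (\<lambda>g. exp (- g\<^sup>2 / 2) * exp ((c * M x) * g) * exp (a * T x))
       (sqrt (2 * pi) * exp ((c * M x)\<^sup>2 / 2) * exp (a * T x))" for x
    by (rule has_bochner_integral_mult_left) (rule gauss1)
  have sum: "has_bochner_integral lborel (\<lambda>g. \<Sum>x\<in>spins n. exp (- g\<^sup>2 / 2) * exp ((c * M x) * g) * exp (a * T x))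
       (\<Sum>x\<in>spins n. sqrt (2 * pi) * exp ((c * M x)\<^sup>2 / 2) * exp (a * T x))"
    by (rule has_bochner_integral_sum) (rule each)
  have c2: "c\<^sup>2 = \<beta> / n" unfolding c_def using assms by simp
  have pw: "sqrt (2 * pi) * exp ((c * M x)\<^sup>2 / 2) * exp (a * T x) =
          sqrt (2 * pi) * exp (\<beta> * (\<Sum>i<n. x i)\<^sup>2 / (2 * real n) + a * (\<Sum>i\<in>S. x i))" for x
  proof -
    have "(c * M x)\<^sup>2 / 2 = \<beta> * (\<Sum>i<n. x i)\<^sup>2 / (2 * real n)"
      by (simp add: power_mult_distrib c2 M_def)
    then show ?thesis by (simp add: exp_add T_def)
  qed
  have ve: "(\<Sum>x\<in>spins n. sqrt (2 * pi) * exp ((c * M x)\<^sup>2 / 2) * exp (a * T x)) = sqrt (2 * pi) * Wf n \<beta> S a"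
    unfolding Wf_def sum_distrib_left pw ..
  have fe: "(\<lambda>g. \<Sum>x\<in>spins n. exp (- g\<^sup>2 / 2) * exp ((c * M x) * g) * exp (a * T x))
     = (\<lambda>g. exp (- g\<^sup>2 / 2) * ((2 * cosh (c * g)) ^ (n - card S) * (2 * cosh (c * g + a)) ^ card S))"
  proof
    fix g
    have "(\<Sum>x\<in>spins n. exp (- g\<^sup>2 / 2) * exp ((c * M x) * g) * exp (a * T x))
        = exp (- g\<^sup>2 / 2) * (\<Sum>x\<in>spins n. exp ((c * g) * M x + a * T x))"
      unfolding sum_distrib_left by (intro sum.cong refl) (simp add: exp_add mult_ac)
    also have "\<dots> = exp (- g\<^sup>2 / 2) * ((2 * cosh (c * g)) ^ (n - card S) * (2 * cosh (c * g + a)) ^ card S)"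
      unfolding M_def T_def using prodform[OF assms(3)] by simp
    finally show "(\<Sum>x\<in>spins n. exp (- g\<^sup>2 / 2) * exp ((c * M x) * g) * exp (a * T x))
     = exp (- g\<^sup>2 / 2) * ((2 * cosh (c * g)) ^ (n - card S) * (2 * cosh (c * g + a)) ^ card S)" .
  qed
  from sum have "has_bochner_integral lborel
     (\<lambda>g. exp (- g\<^sup>2 / 2) * ((2 * cosh (c * g)) ^ (n - card S) * (2 * cosh (c * g + a)) ^ card S))
     (sqrt (2 * pi) * Wf n \<beta> S a)" unfolding fe ve .
  then show ?thesis unfolding c_def .
qed



lemma tanh_le_self: "x \<ge> 0 \<Longrightarrow> tanh x \<le> (x::real)"
proof -
  assume x: "x \<ge> 0"
  have "(\<lambda>y. y - tanh y) 0 \<le> (\<lambda>y. y - tanh y) x"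
  proof (rule DERIV_nonneg_imp_nondecreasing[OF x])
    fix y :: real
    have "((\<lambda>y. y - tanh y) has_real_derivative (1 - (1 - tanh y ^ 2))) (at y)"
      by (intro derivative_eq_intros) auto
    then show "\<exists>d. ((\<lambda>y. y - tanh y) has_real_derivative d) (at y) \<and> d \<ge> 0" by force
  qed
  then show ?thesis by simp
qed

lemma abs_tanh_le: "\<bar>tanh x\<bar> \<le> \<bar>x::real\<bar>"
  using tanh_le_self[of "\<bar>x\<bar>"] by simp

lemma ln_cosh_le: "x \<ge> 0 \<Longrightarrow> ln (cosh x) \<le> (x::real)\<^sup>2 / 2"
proof -
  assume x: "x \<ge> 0"
  have "(\<lambda>y. y\<^sup>2 / 2 - ln (cosh y)) 0 \<le> (\<lambda>y. y\<^sup>2 / 2 - ln (cosh y)) x"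
  proof (rule DERIV_nonneg_imp_nondecreasing[OF x])
    fix y :: real
    assume "0 \<le> y"
    have "((\<lambda>y. y\<^sup>2 / 2 - ln (cosh y)) has_real_derivative (y - sinh y / cosh y)) (at y)"
      by (intro derivative_eq_intros) (auto simp: power2_eq_square)
    moreover have "sinh y / cosh y \<le> y" using tanh_le_self[OF \<open>0 \<le> y\<close>] by (simp add: tanh_def)
    ultimately show "\<exists>d. ((\<lambda>y. y\<^sup>2 / 2 - ln (cosh y)) has_real_derivative d) (at y) \<and> d \<ge> 0"
      by force
  qed
  then show ?thesis by simp
qed

lemma cosh_le_exp_sq: "cosh (x::real) \<le> exp (x\<^sup>2 / 2)"
proof -
  have "cosh x = cosh \<bar>x\<bar>" by simp
  also have "\<dots> = exp (ln (cosh \<bar>x\<bar>))" by simp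
  also have "\<dots> \<le> exp (\<bar>x\<bar>\<^sup>2 / 2)" using ln_cosh_le[of "\<bar>x\<bar>"] by (subst exp_le_cancel_iff) simp
  finally show ?thesis by simp
qed

lemma binom_sym_bounds:
  fixes v :: real
  assumes "\<bar>v\<bar> \<le> 1"
  shows "2 \<le> (1 + v) ^ s + (1 - v) ^ s" and "(1 + v) ^ s + (1 - v) ^ s \<le> 2 * cosh (real s * v)"
proof -
  have "1 + real s * v \<le> (1 + v) ^ s" using assms by (intro Bernoulli_inequality) simp
  moreover have "1 + real s * (-v) \<le> (1 + (-v)) ^ s" using assms by (intro Bernoulli_inequality) simp
  ultimately show "2 \<le> (1 + v) ^ s + (1 - v) ^ s" by simp
  have "(1 + v) ^ s \<le> exp v ^ s"
    using assms by (intro power_mono) (auto simp: add.commute)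
  moreover have "(1 - v) ^ s \<le> exp (-v) ^ s"
    using assms exp_ge_add_one_self[of "-v"] by (intro power_mono) auto
  ultimately have "(1 + v) ^ s + (1 - v) ^ s \<le> exp (real s * v) + exp (- (real s * v))"
    by (simp add: exp_of_nat_mult[symmetric])
  then show "(1 + v) ^ s + (1 - v) ^ s \<le> 2 * cosh (real s * v)"
    by (simp add: cosh_field_def)
qed



lemma pointwise:
  fixes g a c \<beta> :: real and n s :: nat
  assumes sn: "s \<le> n" and c0: "0 \<le> c" and nc: "real n * c\<^sup>2 = \<beta>" and b0: "0 \<le> \<beta>"
  defines "F \<equiv> (exp (- g\<^sup>2 / 2) * ((2 * cosh (c * g)) ^ (n - s) * (2 * cosh (c * g + a)) ^ s)
               + exp (- g\<^sup>2 / 2) * ((2 * cosh (c * g)) ^ (n - s) * (2 * cosh (c * g - a)) ^ s))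
               / (2 * cosh a ^ s) - exp (- g\<^sup>2 / 2) * (2 * cosh (c * g)) ^ n"
  shows "0 \<le> F \<and> F \<le> 2 ^ n * exp (- g\<^sup>2 * (1 - \<beta>) / 2) * (cosh (real s * \<bar>tanh a\<bar> * c * g) - 1)"
proof -
  define y where "y = c * g"
  define u where "u = tanh y"
  define t where "t = tanh a"
  define C where "C = 2 * cosh y"
  define P where "P = exp (- g\<^sup>2 / 2) * C ^ n"
  define X where "X = ((1 + t * u) ^ s + (1 - t * u) ^ s) / 2 - 1"
  have chp: "cosh a > 0" "cosh y > 0" by auto
  have cp: "2 * cosh (y + a) = C * cosh a * (1 + t * u)"
    unfolding C_def t_def u_def tanh_def cosh_add using chp by (simp add: field_simps)
  have cm: "2 * cosh (y - a) = C * cosh a * (1 - t * u)"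
    unfolding C_def t_def u_def tanh_def cosh_diff using chp by (simp add: field_simps)
  have Fe: "F = P * X"
  proof -
    have "F = (exp (- g\<^sup>2 / 2) * (C ^ (n - s) * (C * cosh a * (1 + t * u)) ^ s)
               + exp (- g\<^sup>2 / 2) * (C ^ (n - s) * (C * cosh a * (1 - t * u)) ^ s))
               / (2 * cosh a ^ s) - exp (- g\<^sup>2 / 2) * C ^ n"
    proof -
      have "F = (exp (- g\<^sup>2 / 2) * (C ^ (n - s) * (2 * cosh (y + a)) ^ s)
               + exp (- g\<^sup>2 / 2) * (C ^ (n - s) * (2 * cosh (y - a)) ^ s))
               / (2 * cosh a ^ s) - exp (- g\<^sup>2 / 2) * C ^ n"
        unfolding F_def y_def C_def ..
      then show ?thesis unfolding cp cm .
    qed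
    also have "\<dots> = exp (- g\<^sup>2 / 2) * (C ^ (n - s) * C ^ s) * ((1 + t * u) ^ s + (1 - t * u) ^ s) / 2
                   - exp (- g\<^sup>2 / 2) * C ^ n"
      unfolding power_mult_distrib using chp by (simp add: divide_simps) (simp add: algebra_simps)
    also have "C ^ (n - s) * C ^ s = C ^ n" using sn by (simp add: power_add[symmetric])
    finally show ?thesis unfolding P_def X_def by (simp add: field_simps)
  qed
  have tu: "\<bar>t * u\<bar> \<le> 1"
  proof -
    have "\<bar>t\<bar> \<le> 1" "\<bar>u\<bar> \<le> 1" unfolding t_def u_def using tanh_real_bounds[of a] tanh_real_bounds[of y]
      by auto
    then show ?thesis by (simp add: abs_mult mult_le_one)
  qed
  have X0: "0 \<le> X" using binom_sym_bounds(1)[OF tu, of s] unfolding X_def by simp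
  have X1: "X \<le> cosh (real s * (t * u)) - 1" using binom_sym_bounds(2)[OF tu, of s] unfolding X_def by simp
  have "cosh (real s * (t * u)) = cosh \<bar>real s * (t * u)\<bar>" by simp
  also have "\<dots> \<le> cosh \<bar>real s * \<bar>tanh a\<bar> * c * g\<bar>"
  proof (subst cosh_real_nonneg_le_iff)
    have "\<bar>u\<bar> \<le> \<bar>y\<bar>" unfolding u_def by (rule abs_tanh_le)
    then have "\<bar>t\<bar> * \<bar>u\<bar> \<le> \<bar>t\<bar> * \<bar>y\<bar>" by (simp add: mult_left_mono)
    then have "real s * (\<bar>t\<bar> * \<bar>u\<bar>) \<le> real s * (\<bar>t\<bar> * \<bar>y\<bar>)" by (simp add: mult_left_mono)
    then show "\<bar>real s * (t * u)\<bar> \<le> \<bar>real s * \<bar>tanh a\<bar> * c * g\<bar>"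
      unfolding t_def y_def using c0 by (simp add: abs_mult mult_ac)
  qed auto
  also have "\<dots> = cosh (real s * \<bar>tanh a\<bar> * c * g)" by simp
  finally have X2: "X \<le> cosh (real s * \<bar>tanh a\<bar> * c * g) - 1" using X1 by simp
  have P0: "0 \<le> P" unfolding P_def C_def by simp
  have P1: "P \<le> 2 ^ n * exp (- g\<^sup>2 * (1 - \<beta>) / 2)"
  proof -
    have "cosh y ^ n \<le> exp (y\<^sup>2 / 2) ^ n" by (intro power_mono cosh_le_exp_sq) simp
    also have "\<dots> = exp (\<beta> * g\<^sup>2 / 2)"
      unfolding exp_of_nat_mult[symmetric] y_def nc[symmetric] by (simp add: power_mult_distrib)
    finally have "C ^ n \<le> 2 ^ n * exp (\<beta> * g\<^sup>2 / 2)" unfolding C_def by (simp add: power_mult_distrib)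
    then have "P \<le> exp (- g\<^sup>2 / 2) * (2 ^ n * exp (\<beta> * g\<^sup>2 / 2))"
      unfolding P_def by (intro mult_left_mono) auto
    also have "\<dots> = 2 ^ n * exp (- g\<^sup>2 * (1 - \<beta>) / 2)"
      by (simp add: exp_add[symmetric] field_simps)
    finally show ?thesis .
  qed
  have "F \<le> P * (cosh (real s * \<bar>tanh a\<bar> * c * g) - 1)" unfolding Fe using mult_left_mono[OF X2 P0] .
  also have "\<dots> \<le> 2 ^ n * exp (- g\<^sup>2 * (1 - \<beta>) / 2) * (cosh (real s * \<bar>tanh a\<bar> * c * g) - 1)"
    by (intro mult_right_mono P1) (simp add: cosh_real_ge_1)
  finally show ?thesis using Fe P0 X0 by simp
qed



lemma main_bound:
  fixes a \<beta> :: real and n :: nat and S :: "nat set"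
  assumes n0: "n > 0" and b0: "0 \<le> \<beta>" and b1: "\<beta> < 1" and Sn: "S \<subseteq> {..<n}"
  defines "\<epsilon> \<equiv> real (card S) * \<bar>tanh a\<bar> * sqrt (\<beta> / n)"
  defines "\<sigma> \<equiv> sqrt (1 / (1 - \<beta>))"
  shows "0 \<le> sqrt (2 * pi) * Wf n \<beta> S a / cosh a ^ card S - sqrt (2 * pi) * Wf n \<beta> S 0 \<and>
         sqrt (2 * pi) * Wf n \<beta> S a / cosh a ^ card S - sqrt (2 * pi) * Wf n \<beta> S 0
           \<le> 2 ^ n * (sqrt (2 * pi * \<sigma>\<^sup>2) * exp (\<epsilon>\<^sup>2 * \<sigma>\<^sup>2 / 2) - sqrt (2 * pi * \<sigma>\<^sup>2))"
proof -
  define c where "c = sqrt (\<beta> / n)"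
  define s where "s = card S"
  have sn: "s \<le> n" unfolding s_def using card_mono[OF _ Sn] by simp
  have c0: "0 \<le> c" unfolding c_def using b0 by simp
  have nc: "real n * c\<^sup>2 = \<beta>" unfolding c_def using b0 n0 by simp
  have sig0: "\<sigma> > 0" unfolding \<sigma>_def using b1 by simp
  have sig2: "\<sigma>\<^sup>2 = 1 / (1 - \<beta>)" unfolding \<sigma>_def using b1 by simp
  define I where "I = sqrt (2 * pi) * Wf n \<beta> S a"
  define I0 where "I0 = sqrt (2 * pi) * Wf n \<beta> S 0"
  define kp where "kp = (\<lambda>g. exp (- g\<^sup>2 / 2) * ((2 * cosh (c * g)) ^ (n - s) * (2 * cosh (c * g + a)) ^ s))"
  define km where "km = (\<lambda>g. exp (- g\<^sup>2 / 2) * ((2 * cosh (c * g)) ^ (n - s) * (2 * cosh (c * g - a)) ^ s))"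
  define d where "d = (\<lambda>g. exp (- g\<^sup>2 / 2) * (2 * cosh (c * g)) ^ n)"
  have Ip: "has_bochner_integral lborel kp I"
    unfolding kp_def I_def c_def s_def by (rule hs[OF n0 b0 Sn])
  have Im: "has_bochner_integral lborel km I"
  proof -
    have "has_bochner_integral lborel (\<lambda>x. kp (0 + (-1) * x)) (I /\<^sub>R \<bar>-1\<bar>)"
      using Ip lborel_has_bochner_integral_real_affine_iff[of "-1" kp I 0] by simp
    moreover have "(\<lambda>x. kp (0 + (-1) * x)) = km"
    proof
      fix x
      have "c * (0 + (-1) * x) + a = - (c * x - a)" by simp
      then show "kp (0 + (-1) * x) = km x" unfolding kp_def km_def by (simp only: cosh_minus) simp
    qed
    ultimately show ?thesis by simp
  qed
  have I0i: "has_bochner_integral lborel d I0"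
  proof -
    have "has_bochner_integral lborel
     (\<lambda>g. exp (- g\<^sup>2 / 2) * ((2 * cosh (sqrt (\<beta> / n) * g)) ^ (n - card S)
                                * (2 * cosh (sqrt (\<beta> / n) * g + 0)) ^ card S))
     (sqrt (2 * pi) * Wf n \<beta> S 0)" by (rule hs[OF n0 b0 Sn])
    moreover have "(\<lambda>g. exp (- g\<^sup>2 / 2) * ((2 * cosh (sqrt (\<beta> / n) * g)) ^ (n - card S)
                                * (2 * cosh (sqrt (\<beta> / n) * g + 0)) ^ card S)) = d"
    proof
      fix g
      have "(2 * cosh (c * g)) ^ (n - s) * (2 * cosh (c * g)) ^ s = (2 * cosh (c * g)) ^ n"
        by (metis le_add_diff_inverse2 power_add sn)
      then show "exp (- g\<^sup>2 / 2) * ((2 * cosh (sqrt (\<beta> / n) * g)) ^ (n - card S)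
                                * (2 * cosh (sqrt (\<beta> / n) * g + 0)) ^ card S) = d g"
        unfolding d_def c_def s_def by simp
    qed
    ultimately show ?thesis unfolding I0_def by simp
  qed
  define ch where "ch = 2 * cosh a ^ s"
  have ch0: "ch \<noteq> 0" unfolding ch_def by simp
  define F where "F = (\<lambda>g. (kp g + km g) / ch - d g)"
  have IF: "has_bochner_integral lborel F ((I + I) / ch - I0)"
    unfolding F_def
    by (intro has_bochner_integral_diff has_bochner_integral_divide_zero has_bochner_integral_add Ip Im I0i)
  define q where "q = (\<lambda>e g. exp (- g\<^sup>2 / (2 * \<sigma>\<^sup>2)) * exp (e * g))"
  define G where "G = sqrt (2 * pi * \<sigma>\<^sup>2)"
  define E where "E = exp (\<epsilon>\<^sup>2 * \<sigma>\<^sup>2 / 2)"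
  have q1: "has_bochner_integral lborel (q \<epsilon>) (G * E)"
    unfolding q_def G_def E_def by (rule gauss_mgf[OF sig0])
  have q2: "has_bochner_integral lborel (q (-\<epsilon>)) (G * E)"
    using gauss_mgf[OF sig0, of "-\<epsilon>"] unfolding q_def G_def E_def by simp
  have q3: "has_bochner_integral lborel (q 0) G"
    using gauss_mgf[OF sig0, of 0] unfolding q_def G_def by simp
  define U where "U = (\<lambda>g. 2 ^ n * ((q \<epsilon> g + q (-\<epsilon>) g) / 2 - q 0 g))"
  have IU: "has_bochner_integral lborel U (2 ^ n * ((G * E + G * E) / 2 - G))"
    unfolding U_def
    by (intro has_bochner_integral_mult_right has_bochner_integral_diff has_bochner_integral_divide_zero
        has_bochner_integral_add q1 q2 q3)
  have pw: "0 \<le> F g \<and> F g \<le> U g" for g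
  proof -
    have "0 \<le> F g \<and> F g \<le> 2 ^ n * exp (- g\<^sup>2 * (1 - \<beta>) / 2) * (cosh (real s * \<bar>tanh a\<bar> * c * g) - 1)"
      using pointwise[OF sn c0 nc b0, of g a] unfolding F_def kp_def km_def d_def ch_def .
    moreover have "U g = 2 ^ n * exp (- g\<^sup>2 * (1 - \<beta>) / 2) * (cosh (real s * \<bar>tanh a\<bar> * c * g) - 1)"
    proof -
      have e1: "exp (- g\<^sup>2 / (2 * \<sigma>\<^sup>2)) = exp (- g\<^sup>2 * (1 - \<beta>) / 2)"
        unfolding sig2 using b1 by simp
      have e2: "real s * \<bar>tanh a\<bar> * c * g = \<epsilon> * g" unfolding \<epsilon>_def s_def c_def by simp
      show ?thesis unfolding U_def q_def e1 e2 cosh_field_def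
        by (simp add: field_simps)
    qed
    ultimately show ?thesis by simp
  qed
  have "0 \<le> integral\<^sup>L lborel F" by (intro Bochner_Integration.integral_nonneg) (use pw in auto)
  moreover have "integral\<^sup>L lborel F \<le> integral\<^sup>L lborel U"
    by (intro Bochner_Integration.integral_mono has_bochner_integral_iff[THEN iffD1, OF IF, THEN conjunct1] has_bochner_integral_iff[THEN iffD1, OF IU, THEN conjunct1])
       (use pw in auto)
  moreover have "integral\<^sup>L lborel F = I / cosh a ^ s - I0"
    using has_bochner_integral_integral_eq[OF IF] unfolding ch_def by simp
  moreover have "integral\<^sup>L lborel U = 2 ^ n * (G * E - G)"
    using has_bochner_integral_integral_eq[OF IU] by simp
  ultimately show ?thesis
    unfolding I_def I0_def s_def G_def E_def by (simp add: algebra_simps)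
qed



lemma spins_sq: "x \<in> spins n \<Longrightarrow> i < n \<Longrightarrow> x i * x i = (1::real)"
proof -
  assume "x \<in> spins n" "i < n"
  then have "x i \<in> {-1, 1}" unfolding spins_def by (auto simp: PiE_iff)
  then show ?thesis by auto
qed

lemma quad_CW:
  assumes x: "x \<in> spins n" and n0: "n > 0"
  shows "(\<Sum>i<n. \<Sum>j<n. x i * Q_CW n i j * x j) = ((\<Sum>i<n. x i)\<^sup>2 - real n) / real n"
proof -
  have row: "(\<Sum>j<n. x i * Q_CW n i j * x j) = (x i * (\<Sum>j<n. x j) - 1) / real n" if i: "i < n" for i
  proof -
    have "(\<Sum>j<n. x i * Q_CW n i j * x j) = (\<Sum>j<n. x i * x j / n - (if j = i then x i * x j / n else 0))"
      by (intro sum.cong) (auto simp: Q_CW_def)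
    also have "\<dots> = (\<Sum>j<n. x i * x j / n) - x i * x i / n"
      using i by (simp add: sum_subtractf)
    also have "\<dots> = (x i * (\<Sum>j<n. x j) - 1) / real n"
      using spins_sq[OF x i] by (simp add: sum_distrib_left sum_divide_distrib diff_divide_distrib)
    finally show ?thesis .
  qed
  have "(\<Sum>i<n. \<Sum>j<n. x i * Q_CW n i j * x j) = (\<Sum>i<n. (x i * (\<Sum>j<n. x j) - 1) / real n)"
    by (intro sum.cong refl row) simp
  also have "\<dots> = ((\<Sum>i<n. x i)\<^sup>2 - real n) / real n"
    by (simp add: sum_divide_distrib[symmetric] sum_subtractf sum_distrib_right[symmetric] power2_eq_square)
  finally show ?thesis .
qed

lemma weight_CW:
  assumes x: "x \<in> spins n" and n0: "n > 0" and Sn: "S \<subseteq> {..<n}"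
  shows "ising_weight n \<beta> (Q_CW n) (mu_S S A) x
     = exp (- \<beta> / 2) * exp (\<beta> * (\<Sum>i<n. x i)\<^sup>2 / (2 * real n) + A * (\<Sum>i\<in>S. x i))"
proof -
  have m: "(\<Sum>i<n. mu_S S A i * x i) = A * (\<Sum>i\<in>S. x i)"
    unfolding mu_S_def using sum_if_restrict[OF Sn, of A x] by simp
  have "\<beta> / 2 * (((\<Sum>i<n. x i)\<^sup>2 - real n) / real n) = - \<beta> / 2 + \<beta> * (\<Sum>i<n. x i)\<^sup>2 / (2 * real n)"
    using n0 by (simp add: field_simps)
  then have "\<beta> / 2 * (\<Sum>i<n. \<Sum>j<n. x i * Q_CW n i j * x j) + (\<Sum>i<n. mu_S S A i * x i)
     = - \<beta> / 2 + (\<beta> * (\<Sum>i<n. x i)\<^sup>2 / (2 * real n) + A * (\<Sum>i\<in>S. x i))"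
    unfolding quad_CW[OF x n0] m by simp
  then show ?thesis
    unfolding ising_weight_def by (simp add: exp_add[symmetric])
qed

lemma expect_CW:
  assumes n0: "n > 0" and Sn: "S \<subseteq> {..<n}"
  shows "ising_expect n \<beta> (Q_CW n) (mu_S S A) (\<lambda>x. exp (l * (\<Sum>i\<in>S. x i)))
       = Wf n \<beta> S (A + l) / Wf n \<beta> S A"
proof -
  have pw: "exp (l * (\<Sum>i\<in>S. x i)) * ising_weight n \<beta> (Q_CW n) (mu_S S A) x =
         exp (- \<beta> / 2) * exp (\<beta> * (\<Sum>i<n. x i)\<^sup>2 / (2 * real n) + (A + l) * (\<Sum>i\<in>S. x i))"
    if x: "x \<in> spins n" for x
    unfolding weight_CW[OF x n0 Sn] by (simp add: exp_add[symmetric] algebra_simps)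
  have num: "(\<Sum>x\<in>spins n. exp (l * (\<Sum>i\<in>S. x i)) * ising_weight n \<beta> (Q_CW n) (mu_S S A) x)
      = exp (- \<beta> / 2) * Wf n \<beta> S (A + l)"
    using sum.cong[OF refl pw, of "spins n"] by (simp add: Wf_def sum_distrib_left[symmetric])
  have pw2: "ising_weight n \<beta> (Q_CW n) (mu_S S A) x =
         exp (- \<beta> / 2) * exp (\<beta> * (\<Sum>i<n. x i)\<^sup>2 / (2 * real n) + A * (\<Sum>i\<in>S. x i))"
    if x: "x \<in> spins n" for x
    by (rule weight_CW[OF x n0 Sn])
  have den: "ising_Z n \<beta> (Q_CW n) (mu_S S A) = exp (- \<beta> / 2) * Wf n \<beta> S A"
    using sum.cong[OF refl pw2, of "spins n"] by (simp add: Wf_def ising_Z_def sum_distrib_left[symmetric])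
  show ?thesis unfolding ising_expect_def num den by simp
qed

lemma Wf0_ge: "Wf n \<beta> S 0 \<ge> 2 ^ n" if "\<beta> \<ge> 0"
proof -
  have "Wf n \<beta> S 0 \<ge> (\<Sum>x\<in>spins n. 1)"
    unfolding Wf_def using that by (intro sum_mono) simp
  also have "(\<Sum>x\<in>spins n. (1::real)) = 2 ^ n"
    unfolding spins_def by (simp add: card_PiE)
  finally show ?thesis .
qed



definition Bf :: "real \<Rightarrow> real \<Rightarrow> real" where
  "Bf \<beta> e = (sqrt (2 * pi * (sqrt (1 / (1 - \<beta>)))\<^sup>2) * exp (e\<^sup>2 * (sqrt (1 / (1 - \<beta>)))\<^sup>2 / 2)
              - sqrt (2 * pi * (sqrt (1 / (1 - \<beta>)))\<^sup>2)) / sqrt (2 * pi)"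

lemma key_bound:
  fixes a \<beta> :: real and n :: nat and S :: "nat set"
  assumes n0: "n > 0" and b0: "0 \<le> \<beta>" and b1: "\<beta> < 1" and Sn: "S \<subseteq> {..<n}"
  shows "0 \<le> (Wf n \<beta> S a / cosh a ^ card S) / Wf n \<beta> S 0 - 1 \<and>
         (Wf n \<beta> S a / cosh a ^ card S) / Wf n \<beta> S 0 - 1 \<le> Bf \<beta> (real (card S) * \<bar>tanh a\<bar> * sqrt (\<beta> / n))"
proof -
  define \<sigma> where "\<sigma> = sqrt (1 / (1 - \<beta>))"
  define \<epsilon> where "\<epsilon> = real (card S) * \<bar>tanh a\<bar> * sqrt (\<beta> / n)"
  define K where "K = sqrt (2 * pi * \<sigma>\<^sup>2) * exp (\<epsilon>\<^sup>2 * \<sigma>\<^sup>2 / 2) - sqrt (2 * pi * \<sigma>\<^sup>2)"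
  define X where "X = Wf n \<beta> S a / cosh a ^ card S"
  define W0 where "W0 = Wf n \<beta> S 0"
  have mb: "0 \<le> sqrt (2 * pi) * X - sqrt (2 * pi) * W0 \<and> sqrt (2 * pi) * X - sqrt (2 * pi) * W0 \<le> 2 ^ n * K"
    using main_bound[OF n0 b0 b1 Sn, of a] unfolding K_def \<sigma>_def \<epsilon>_def X_def W0_def by simp
  have W0ge: "W0 \<ge> 2 ^ n" unfolding W0_def by (rule Wf0_ge[OF b0])
  have "(0::real) < 2 ^ n" by simp
  then have W0p: "W0 > 0" using W0ge by linarith
  have sp: "sqrt (2 * pi) > 0" by simp
  have "0 \<le> sqrt (2 * pi) * (X - W0)" using mb by (simp add: right_diff_distrib)
  then have d1: "X - W0 \<ge> 0" using pi_gt_zero by (auto simp: zero_le_mult_iff)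
  have d2: "sqrt (2 * pi) * (X - W0) \<le> 2 ^ n * K" using mb by (simp add: right_diff_distrib)
  have "X / W0 - 1 = (X - W0) / W0" using W0p by (simp add: field_simps)
  also have "\<dots> \<le> (X - W0) / 2 ^ n" using d1 W0ge W0p by (intro divide_left_mono) auto
  also have "\<dots> \<le> K / sqrt (2 * pi)" using d2 sp by (simp add: field_simps)
  finally have up: "X / W0 - 1 \<le> K / sqrt (2 * pi)" .
  have lo: "0 \<le> X / W0 - 1" using d1 W0p by (simp add: field_simps)
  show ?thesis using up lo unfolding X_def W0_def Bf_def K_def \<sigma>_def \<epsilon>_def by simp
qed

lemma Bf_tendsto: "(\<lambda>n. e n) \<longlonglongrightarrow> 0 \<Longrightarrow> (\<lambda>n. Bf \<beta> (e n)) \<longlonglongrightarrow> 0"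
proof -
  assume e: "(\<lambda>n. e n) \<longlonglongrightarrow> 0"
  have "(\<lambda>n. Bf \<beta> (e n)) \<longlonglongrightarrow> Bf \<beta> 0"
    unfolding Bf_def by (intro tendsto_intros e) auto
  then show ?thesis by (simp add: Bf_def)
qed



theorem mainTheorem9:
  fixes \<beta> :: real and s :: "nat \<Rightarrow> nat" and S :: "nat \<Rightarrow> nat set"
    and A :: "nat \<Rightarrow> real" and lam :: "nat \<Rightarrow> real"
  assumes "0 \<le> \<beta>" and "\<beta> < 1"
    and "(\<lambda>n. real (s n) / (real n / ln (real n))) \<longlonglongrightarrow> 0"
    and "\<And>n. S n \<subseteq> {..<n}" and "\<And>n. card (S n) = s n"
    and "\<And>n. A n \<ge> 0"
    and "(\<lambda>n. real (s n) * max \<bar>tanh (lam n + A n)\<bar> (tanh (A n)) / sqrt (real n)) \<longlonglongrightarrow> 0"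
  shows "(\<lambda>n. ising_expect n \<beta> (Q_CW n) (mu_S (S n) (A n))
                 (\<lambda>x. exp (lam n * (\<Sum>i\<in>S n. x i)))
             / (cosh (A n + lam n) / cosh (A n)) ^ s n) \<longlonglongrightarrow> 1"
proof -
  note b0 = assms(1) and b1 = assms(2) and Sn = assms(4) and cS = assms(5) and A0 = assms(6)
  note h = assms(7)
  define r where "r = (\<lambda>a n. (Wf n \<beta> (S n) a / cosh a ^ s n) / Wf n \<beta> (S n) 0 - 1)"
  have kb: "0 \<le> r a n \<and> r a n \<le> Bf \<beta> (real (s n) * \<bar>tanh a\<bar> * sqrt (\<beta> / n))" if "n > 0" for a n
    using key_bound[OF that b0 b1 Sn, of a] unfolding r_def cS by simp
  have sq: "sqrt (\<beta> / real n) = sqrt \<beta> / sqrt (real n)" for n by (simp add: real_sqrt_divide)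
  have lim_e: "(\<lambda>n. real (s n) * \<bar>tanh (f n)\<bar> * sqrt (\<beta> / n)) \<longlonglongrightarrow> 0"
    if fb: "\<And>n. \<bar>tanh (f n)\<bar> \<le> max \<bar>tanh (lam n + A n)\<bar> (tanh (A n))" for f
  proof -
    have "(\<lambda>n. real (s n) * \<bar>tanh (f n)\<bar> / sqrt (real n)) \<longlonglongrightarrow> 0"
    proof (rule tendsto_sandwich[OF _ _ tendsto_const h])
      show "\<forall>\<^sub>F n in sequentially. 0 \<le> real (s n) * \<bar>tanh (f n)\<bar> / sqrt (real n)" by simp
      show "\<forall>\<^sub>F n in sequentially. real (s n) * \<bar>tanh (f n)\<bar> / sqrt (real n)
              \<le> real (s n) * max \<bar>tanh (lam n + A n)\<bar> (tanh (A n)) / sqrt (real n)"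
        using fb by (intro always_eventually allI divide_right_mono mult_left_mono) auto
    qed
    then have "(\<lambda>n. sqrt \<beta> * (real (s n) * \<bar>tanh (f n)\<bar> / sqrt (real n))) \<longlonglongrightarrow> sqrt \<beta> * 0"
      by (intro tendsto_intros)
    then show ?thesis by (simp add: sq mult_ac)
  qed
  have lim_r: "(\<lambda>n. r (f n) n) \<longlonglongrightarrow> 0"
    if fb: "\<And>n. \<bar>tanh (f n)\<bar> \<le> max \<bar>tanh (lam n + A n)\<bar> (tanh (A n))" for f
  proof (rule tendsto_sandwich[OF _ _ tendsto_const Bf_tendsto[OF lim_e[OF fb]]])
    show "\<forall>\<^sub>F n in sequentially. 0 \<le> r (f n) n"
      using eventually_gt_at_top[of 0] by eventually_elim (use kb in auto)
    show "\<forall>\<^sub>F n in sequentially. r (f n) n \<le> Bf \<beta> (real (s n) * \<bar>tanh (f n)\<bar> * sqrt (\<beta> / n))"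
      using eventually_gt_at_top[of 0] by eventually_elim (use kb in auto)
  qed
  have l1: "(\<lambda>n. r (A n + lam n) n) \<longlonglongrightarrow> 0" by (rule lim_r) (simp add: add.commute)
  have l2: "(\<lambda>n. r (A n) n) \<longlonglongrightarrow> 0" by (rule lim_r) (simp add: A0)
  have "(\<lambda>n. (1 + r (A n + lam n) n) / (1 + r (A n) n)) \<longlonglongrightarrow> (1 + 0) / (1 + 0)"
    by (intro tendsto_intros l1 l2) simp
  then have L: "(\<lambda>n. (1 + r (A n + lam n) n) / (1 + r (A n) n)) \<longlonglongrightarrow> 1" by simp
  have ev: "\<forall>\<^sub>F n in sequentially. (1 + r (A n + lam n) n) / (1 + r (A n) n) =
      ising_expect n \<beta> (Q_CW n) (mu_S (S n) (A n)) (\<lambda>x. exp (lam n * (\<Sum>i\<in>S n. x i)))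
             / (cosh (A n + lam n) / cosh (A n)) ^ s n"
    using eventually_gt_at_top[of 0]
  proof eventually_elim
    case (elim n)
    have W0: "Wf n \<beta> (S n) 0 > 0" using Wf0_ge[OF b0, of n "S n"]
      by (smt (verit) zero_less_power)
    have r2: "0 \<le> r (A n) n" using kb[OF elim] by simp
    have W2: "Wf n \<beta> (S n) (A n) \<noteq> 0"
    proof
      assume "Wf n \<beta> (S n) (A n) = 0"
      then have "r (A n) n = -1" unfolding r_def using W0 by simp
      then show False using r2 by simp
    qed
    have c1: "cosh (A n + lam n) \<noteq> 0" "cosh (A n) \<noteq> 0" by auto
    show ?case
      unfolding expect_CW[OF elim Sn] r_def using W0 W2 c1
      by (simp add: field_simps power_divide)
  qed
  show ?thesis by (rule Lim_transform_eventually[OF L ev])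
qed

end
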